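(* Let $E_0>0$ and let $\phi$ satisfy the standing assumptions below with $n\le 3$. Define, for $V\in(0,E_0)$, $\kappa(V)=\frac{\varrho+p}{\varrho+3p}\cdot\frac{\varrho'(V)}{p'(V)}$ and $I(V)=\frac15\kappa^2+2\kappa+(\varrho+p)\frac{\kappa'(V)}{p'(V)}$ (i.e. $I=\frac15\kappa^2+2\kappa+(\varrho+p)\frac{d\kappa}{dp}$ with $\frac{d\varrho}{dp}=\varrho'/p'$, $\frac{d\kappa}{dp}=\kappa'/p'$). Then $I(V)\to-\infty$ as $V\to E_0^-$; in particular there is $V_0<E_0$ such that $I(V)\le0$ for all $V\in[V_0,E_0)$, i.e. $I\le 0$ for all $0<p\le p_0:=p(V_0)$.
   Context: Standing assumptions on $\phi:(-\infty,1]\to\mathbb R_+$: $\phi(x)=0$ for $x<0$, $\phi$ analytic on $[0,1]$, and there is $n\in\{0,1,2,\dots\}$ with $\phi'(0)=\dots=\phi^{(n-1)}(0)=0$, $\phi^{(n)}(0)>0$. For $V\in(0,E_0]$: $\varrho(V)=\frac{4\pi}{V^3}\int_V^{E_0}\phi(1-E/E_0)E^2\sqrt{(E/V)^2-1}\,dE$ and $p(V)=\frac{4\pi}{3V}\int_V^{E_0}\phi(1-E/E_0)[(E/V)^2-1]^{3/2}dE$; primes denote derivatives in $V$. *)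

theory Defs
  imports "HOL-Analysis.Analysis"
begin

definition real_analytic_on :: "(real \<Rightarrow> real) \<Rightarrow> real set \<Rightarrow> bool" where
  "real_analytic_on f S \<longleftrightarrow>
     (\<forall>x\<in>S. \<exists>r>0. \<exists>a::nat \<Rightarrow> real.
        \<forall>y. \<bar>y - x\<bar> < r \<longrightarrow> (\<lambda>k. a k * (y - x) ^ k) sums f y)"

text \<open>Standing assumptions on phi with vanishing order n at 0. Analyticity on the closed
  interval [0,1] means that phi agrees on [0,1] with a function psi that is real analytic on an
  open set containing [0,1]; the derivatives of phi at 0 (one-sided) are those of psi.\<close>
definition admissible_phi :: "(real \<Rightarrow> real) \<Rightarrow> nat \<Rightarrow> bool" where
  "admissible_phi phi n \<longleftrightarrow>
     (\<forall>x\<le>1. phi x \<ge> 0) \<and> (\<forall>x<0. phi x = 0) \<and>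
     (\<exists>psi S. open S \<and> {0..1} \<subseteq> S \<and> real_analytic_on psi S \<and>
        (\<forall>x\<in>{0..1}. phi x = psi x) \<and>
        (\<forall>k<n. (deriv ^^ k) psi 0 = 0) \<and> (deriv ^^ n) psi 0 > 0)"

definition rho :: "(real \<Rightarrow> real) \<Rightarrow> real \<Rightarrow> real \<Rightarrow> real" where
  "rho phi E0 V = 4 * pi / V ^ 3 *
     integral {V..E0} (\<lambda>E. phi (1 - E / E0) * E ^ 2 * sqrt ((E / V) ^ 2 - 1))"

definition pres :: "(real \<Rightarrow> real) \<Rightarrow> real \<Rightarrow> real \<Rightarrow> real" where
  "pres phi E0 V = 4 * pi / (3 * V) *
     integral {V..E0} (\<lambda>E. phi (1 - E / E0) * ((E / V) ^ 2 - 1) powr (3 / 2))"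

definition kappa :: "(real \<Rightarrow> real) \<Rightarrow> real \<Rightarrow> real \<Rightarrow> real" where
  "kappa phi E0 V =
     (rho phi E0 V + pres phi E0 V) / (rho phi E0 V + 3 * pres phi E0 V) *
     (deriv (rho phi E0) V / deriv (pres phi E0) V)"

definition Iind :: "(real \<Rightarrow> real) \<Rightarrow> real \<Rightarrow> real \<Rightarrow> real" where
  "Iind phi E0 V = (1 / 5) * (kappa phi E0 V) ^ 2 + 2 * kappa phi E0 V +
     (rho phi E0 V + pres phi E0 V) * (deriv (kappa phi E0) V / deriv (pres phi E0) V)"

end

theory Submission
  imports Defs
begin


lemma diffs_funpow: "(diffs ^^ k) (a::nat\<Rightarrow>real) i = (fact (i+k) / fact i) * a (i+k)"
proof (induction k arbitrary: i)
  case 0 then show ?case by simp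
next
  case (Suc k)
  have "(diffs ^^ Suc k) a i = of_nat (Suc i) * (diffs ^^ k) a (Suc i)"
    by (simp add: diffs_def)
  also have "\<dots> = of_nat (Suc i) * ((fact (Suc i + k) / fact (Suc i)) * a (Suc i + k))"
    using Suc by simp
  also have "\<dots> = (fact (i + Suc k) / fact i) * a (i + Suc k)"
  proof -
    have e: "Suc i + k = i + Suc k" by simp
    have f: "fact (Suc i) = (of_nat (Suc i) :: real) * fact i" by (rule fact_Suc)
    show ?thesis unfolding e f by (simp del: fact_Suc of_nat_Suc)
  qed
  finally show ?case .
qed

lemma diffs_funpow_summable:
  fixes c :: "nat \<Rightarrow> real"
  assumes "\<And>x. \<bar>x\<bar> < K \<Longrightarrow> summable (\<lambda>i. c i * x ^ i)"
  shows "\<bar>x\<bar> < K \<Longrightarrow> summable (\<lambda>i. (diffs ^^ k) c i * x ^ i)"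
proof (induction k arbitrary: x)
  case 0 then show ?case using assms by simp
next
  case (Suc k)
  show ?case using termdiff_converges[of x K "(diffs ^^ k) c"] Suc by auto
qed

lemma powser_deriv:
  fixes c :: "nat \<Rightarrow> real"
  assumes "\<And>x. \<bar>x\<bar> < K \<Longrightarrow> summable (\<lambda>i. c i * x ^ i)" "\<bar>x\<bar> < K"
  shows "((\<lambda>y. \<Sum>i. (diffs ^^ k) c i * y ^ i) has_real_derivative
           (\<Sum>i. (diffs ^^ Suc k) c i * x ^ i)) (at x)"
  using termdiffs_strong'[of K "(diffs ^^ k) c" x] diffs_funpow_summable[OF assms(1)] assms(2)
  by auto

lemma phi_factor:
  assumes "admissible_phi phi n"
  obtains r chi chi1 chi2 where "0 < r" "r \<le> 1" "chi 0 > 0"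
    "\<forall>x\<in>{0..<r}. phi x = x^n * chi x"
    "\<forall>x. \<bar>x\<bar> < r \<longrightarrow> (chi has_real_derivative chi1 x) (at x)"
    "\<forall>x. \<bar>x\<bar> < r \<longrightarrow> (chi1 has_real_derivative chi2 x) (at x)"
    "continuous_on {-r<..<r} chi2"
proof -
  obtain psi S where S: "open S" "{0..1} \<subseteq> S" "real_analytic_on psi S"
     "\<forall>x\<in>{0..1}. phi x = psi x" "\<forall>k<n. (deriv ^^ k) psi 0 = 0" "(deriv ^^ n) psi 0 > 0"
    using assms unfolding admissible_phi_def by blast
  have "0 \<in> S" using S(2) by auto
  then obtain r0 a where r0: "r0 > 0" and sa: "\<And>y. \<bar>y\<bar> < r0 \<Longrightarrow> (\<lambda>k. a k * y ^ k) sums psi y"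
    using S(3) unfolding real_analytic_on_def by fastforce
  have sm: "\<And>x. \<bar>x\<bar> < r0 \<Longrightarrow> summable (\<lambda>i. a i * x ^ i)"
    using sa sums_summable by blast
  define F where "F k y = (\<Sum>i. (diffs ^^ k) a i * y ^ i)" for k y
  have psiF: "\<bar>y\<bar> < r0 \<Longrightarrow> (deriv ^^ k) psi y = F k y" for k y
  proof (induction k arbitrary: y)
    case 0 then show ?case using sa[OF 0] sums_unique by (simp add: F_def)
  next
    case (Suc k)
    have "((deriv ^^ k) psi has_real_derivative F (Suc k) y) (at y)"
    proof (rule has_field_derivative_transform_within_open[of "F k" _ _ "{-r0<..<r0}"])
      show "(F k has_real_derivative F (Suc k) y) (at y)"
        unfolding F_def[abs_def] using powser_deriv[OF sm Suc.prems] by simp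
      show "\<And>x. x \<in> {- r0<..<r0} \<Longrightarrow> F k x = (deriv ^^ k) psi x"
        using Suc.IH by auto
    qed (use Suc.prems in auto)
    then show ?case by (simp add: DERIV_imp_deriv)
  qed
  have ak: "(deriv ^^ k) psi 0 = fact k * a k" for k
  proof -
    have "F k 0 = (diffs ^^ k) a 0" unfolding F_def by (rule powser_zero)
    then show ?thesis using psiF[of 0 k] r0 diffs_funpow[of k a 0] by simp
  qed
  have a0: "\<forall>k<n. a k = 0" using S(5) ak by auto
  have an: "a n > 0" using S(6) ak[of n] by (simp add: zero_less_mult_iff)
  define b where "b i = a (i + n)" for i
  have sumb: "(\<lambda>i. y ^ n * (b i * y ^ i)) sums psi y" if "\<bar>y\<bar> < r0" for y
  proof -
    have "(\<lambda>i. a (i + n) * y ^ (i + n)) sums psi y"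
      using sums_iff_shift[of "\<lambda>k. a k * y ^ k" n "psi y"] sa[OF that] a0 by simp
    then show ?thesis by (simp add: b_def power_add mult_ac)
  qed
  have smb: "summable (\<lambda>i. b i * y ^ i)" if "\<bar>y\<bar> < r0" for y
  proof (cases "y = 0")
    case True then show ?thesis by simp
  next
    case False
    have "(\<lambda>i. inverse (y ^ n) * (y ^ n * (b i * y ^ i))) sums (inverse (y ^ n) * psi y)"
      using sums_mult[OF sumb[OF that]] by blast
    moreover have "inverse (y ^ n) * (y ^ n * (b i * y ^ i)) = b i * y ^ i" for i
      using False by simp
    ultimately show ?thesis by (simp add: sums_summable)
  qed
  define chi where "chi y = (\<Sum>i. (diffs ^^ 0) b i * y ^ i)" for y
  define chi1 where "chi1 y = (\<Sum>i. (diffs ^^ 1) b i * y ^ i)" for y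
  define chi2 where "chi2 y = (\<Sum>i. (diffs ^^ 2) b i * y ^ i)" for y
  have psichi: "psi y = y ^ n * chi y" if "\<bar>y\<bar> < r0" for y
  proof -
    have "(\<lambda>i. y ^ n * (b i * y ^ i)) sums (y ^ n * chi y)"
      unfolding chi_def using sums_mult[OF summable_sums[OF smb[OF that]]] by simp
    then show ?thesis using sumb[OF that] sums_unique2 by blast
  qed
  show ?thesis
  proof (rule that[of "min r0 1" chi chi1 chi2])
    show "0 < min r0 1" using r0 by simp
    show "min r0 1 \<le> 1" by simp
    show "chi 0 > 0" using an by (simp add: chi_def b_def)
    show "\<forall>x\<in>{0..<min r0 1}. phi x = x ^ n * chi x"
      using S(4) psichi by auto
    show "\<forall>x. \<bar>x\<bar> < min r0 1 \<longrightarrow> (chi has_real_derivative chi1 x) (at x)"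
      using powser_deriv[where K=r0 and c=b and k=0, OF smb] unfolding chi_def[abs_def] chi1_def by auto
    have d1: "\<bar>x\<bar> < r0 \<Longrightarrow> (chi1 has_real_derivative chi2 x) (at x)" for x
      using powser_deriv[where K=r0 and c=b and k=1, OF smb] unfolding chi1_def[abs_def] chi2_def
      by (auto simp: numeral_2_eq_2)
    then show "\<forall>x. \<bar>x\<bar> < min r0 1 \<longrightarrow> (chi1 has_real_derivative chi2 x) (at x)" by auto
    have "\<bar>x\<bar> < r0 \<Longrightarrow> isCont chi2 x" for x
      using powser_deriv[where K=r0 and c=b and k=2 and x=x, OF smb] unfolding chi2_def[abs_def]
      by (auto simp: numeral_2_eq_2 intro: DERIV_isCont)
    then show "continuous_on {-min r0 1<..<min r0 1} chi2"
      by (intro continuous_at_imp_continuous_on) auto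
  qed
qed



lemma Phi_lim:
  fixes f r1 q1 hFp g r2 q2 :: "real \<Rightarrow> real"
  assumes "(f \<longlongrightarrow> 1) F" "(r1 \<longlongrightarrow> a*R0) F" "(q1 \<longlongrightarrow> (a+1)*P0) F" "(hFp \<longlongrightarrow> 0) F"
    "(g \<longlongrightarrow> R0) F" "(r2 \<longlongrightarrow> a*(a-1)*R0) F" "(q2 \<longlongrightarrow> (a+1)*a*P0) F" "((\<lambda>h. h) \<longlongrightarrow> 0) F"
    "0 < a" "a < 5" "0 < R0" "0 < P0"
  shows "((\<lambda>h. (f h * r1 h / q1 h)^2 / 5 + 2 * h * (f h * r1 h / q1 h) + g h / q1 h *
      (hFp h * r1 h / q1 h + f h * ((r2 h * q1 h - r1 h * q2 h) / (q1 h)^2)))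
     \<longlongrightarrow> a*R0^2/((a+1)^2*P0^2) * (a/5 - 1)) F"
proof -
  have nz: "(a+1)*P0 \<noteq> 0" using assms by simp
  have "((\<lambda>h. (f h * r1 h / q1 h)^2 / 5 + 2 * h * (f h * r1 h / q1 h) + g h / q1 h *
      (hFp h * r1 h / q1 h + f h * ((r2 h * q1 h - r1 h * q2 h) / (q1 h)^2)))
     \<longlongrightarrow> (1 * (a*R0) / ((a+1)*P0))^2/5 + 2 * 0 * (1 * (a*R0) / ((a+1)*P0)) + R0 / ((a+1)*P0) *
      (0 * (a*R0) / ((a+1)*P0) + 1 * (((a*(a-1)*R0) * ((a+1)*P0) - (a*R0) * ((a+1)*a*P0)) / ((a+1)*P0)^2))) F"
    by (intro tendsto_intros assms nz) (use nz in simp)+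
  moreover have "(1 * (a*R0) / ((a+1)*P0))^2/5 + 2 * 0 * (1 * (a*R0) / ((a+1)*P0)) + R0 / ((a+1)*P0) *
      (0 * (a*R0) / ((a+1)*P0) + 1 * (((a*(a-1)*R0) * ((a+1)*P0) - (a*R0) * ((a+1)*a*P0)) / ((a+1)*P0)^2))
     = a*R0^2/((a+1)^2*P0^2) * (a/5 - 1)"
  proof -
    define c where "c = (a+1)*P0"
    have c: "c \<noteq> 0" using nz c_def by simp
    have e1: "(a+1)*a*P0 = a*c" "(a+1)^2*P0^2 = c^2" by (simp_all add: c_def algebra_simps power2_eq_square)
    show ?thesis unfolding e1 c_def[symmetric] using c
      by (simp add: field_simps power2_eq_square)
  qed
  ultimately show ?thesis by simp
qed

lemma powr_prod_deriv:
  fixes R :: "real \<Rightarrow> real"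
  assumes "0 < h" "(R has_real_derivative R1h) (at h)"
  shows "((\<lambda>x. x powr a * R x) has_real_derivative (h powr a / h) * (a * R h + h * R1h)) (at h)"
  using assms by (auto intro!: derivative_eq_intros simp: powr_diff field_simps)

lemma powr_prod_deriv2:
  fixes R R1 :: "real \<Rightarrow> real"
  assumes "0 < h" "(R has_real_derivative R1 h) (at h)" "(R1 has_real_derivative R2h) (at h)"
  shows "((\<lambda>x. (x powr a / x) * (a * R x + x * R1 x)) has_real_derivative
     (h powr a / h^2) * (a*(a-1)*R h + 2*a*h*R1 h + h^2*R2h)) (at h)"
  using assms by (auto intro!: derivative_eq_intros simp: powr_diff field_simps power2_eq_square)

lemma deriv_reflect:
  fixes G g :: "real \<Rightarrow> real"
  assumes "(G has_real_derivative G') (at (E0 - V))" "open T" "V \<in> T" "\<And>W. W \<in> T \<Longrightarrow> g W = G (E0 - W)"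
  shows "(g has_real_derivative -G') (at V)"
proof -
  have "((\<lambda>W. G (E0 - W)) has_real_derivative G' * (-1)) (at V)"
    by (rule DERIV_chain2[where g="\<lambda>W. E0 - W", OF assms(1)]) (auto intro!: derivative_eq_intros)
  then have "((\<lambda>W. G (E0 - W)) has_real_derivative -G') (at V)" by simp
  then show ?thesis
    by (rule has_field_derivative_transform_within_open[OF _ assms(2,3)]) (use assms(4) in auto)
qed

definition kap :: "(real \<Rightarrow> real) \<Rightarrow> (real \<Rightarrow> real) \<Rightarrow> real \<Rightarrow> real" where
  "kap rf pf V = (rf V + pf V) / (rf V + 3 * pf V) * (deriv rf V / deriv pf V)"

definition Ig :: "(real \<Rightarrow> real) \<Rightarrow> (real \<Rightarrow> real) \<Rightarrow> real \<Rightarrow> real" where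
  "Ig rf pf V = (1 / 5) * (kap rf pf V) ^ 2 + 2 * kap rf pf V +
     (rf V + pf V) * (deriv (kap rf pf) V / deriv pf V)"

lemma Iind_Ig: "Iind phi E0 = Ig (rho phi E0) (pres phi E0)"
proof -
  have "kappa phi E0 = kap (rho phi E0) (pres phi E0)"
    by (simp add: fun_eq_iff kappa_def kap_def)
  then show ?thesis by (intro ext) (simp only: Iind_def Ig_def)
qed

lemma at_left_reflect: "at_left (E0::real) = filtermap (\<lambda>h. E0 - h) (at_right 0)"
  unfolding at_left_minus[of E0] at_right_to_0[of "-E0"] filtermap_filtermap
  by (simp add: o_def)

lemma alg_main:
  fixes t h R P r1 q1 r2 q2 Fn Fd D1r D1p D2r D2p d :: real
  assumes t: "t > 0" and h: "h > 0" and d: "d > 0" "d = R + 3*(h*P)" and q: "q1 \<noteq> 0"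
    and Fn: "Fn = t*R + t*h*P" and Fd: "Fd = t*R + 3*(t*h*P)"
    and D: "D1r = t/h*r1" "D1p = t*q1" "D2r = t/h^2*r2" "D2p = t/h*q2"
  shows "1/5 * (Fn/Fd*(D1r/D1p))^2 + 2 * (Fn/Fd*(D1r/D1p)) +
     Fn * ((((D1r + D1p) * Fd - Fn * (D1r + 3 * D1p)) / (Fd * Fd) * (D1r/D1p) +
            (D2r * D1p - D1r * D2p) / (D1p * D1p) * (Fn/Fd)) / D1p)
   = (((R + h*P)/d * r1 / q1)^2 / 5 + 2 * h * ((R + h*P)/d * r1 / q1) + (R + h*P) / q1 *
      (h * (2 * (r1 * P - R * q1) / d^2) * r1 / q1 + (R + h*P)/d * ((r2 * q1 - r1 * q2) / q1^2))) * (1 / h^2)"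
proof -
  have Fn': "Fn = t * (R + h*P)" using Fn by (simp add: algebra_simps)
  have Fd': "Fd = t * d" using Fd d by (simp add: algebra_simps)
  have tn: "t \<noteq> 0" "h \<noteq> 0" "d \<noteq> 0" using t h d by auto
  have e1: "Fn/Fd = (R + h*P)/d" unfolding Fn' Fd' using tn by simp
  have e2: "D1r/D1p = r1/(h*q1)" unfolding D using tn q by (simp add: field_simps)
  have e3: "((D1r + D1p) * Fd - Fn * (D1r + 3 * D1p)) / (Fd * Fd) = 2 * (r1 * P - R * q1) / d^2"
  proof -
    have num: "(D1r + D1p) * Fd - Fn * (D1r + 3 * D1p) = 2*t^2*(r1*P - R*q1)"
      unfolding Fn Fd D using tn by (simp add: field_simps power2_eq_square)
    show ?thesis unfolding num unfolding Fd' using tn by (simp add: field_simps power2_eq_square)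
  qed
  have e4: "(D2r * D1p - D1r * D2p) / (D1p * D1p) = (r2 * q1 - r1 * q2) / (h^2 * q1^2)"
    unfolding D using tn q by (simp add: field_simps power2_eq_square)
  have e5: "Fn * (X / D1p) = ((R + h*P) / q1) * X" for X
    unfolding Fn' D using tn q by (simp add: field_simps)
  show ?thesis unfolding e5 e1 e2 e3 e4 using tn q by (simp add: field_simps power2_eq_square)
qed

lemma null_bound:
  fixes g v :: "real \<Rightarrow> real"
  assumes "(g \<longlongrightarrow> 0) (at_right 0)" "0 < \<delta>" "\<And>h. 0<h \<Longrightarrow> h<\<delta> \<Longrightarrow> \<bar>v h\<bar> \<le> B"
  shows "((\<lambda>h. g h * v h) \<longlongrightarrow> 0) (at_right 0)"
proof (rule Lim_null_comparison)
  show "\<forall>\<^sub>F x in at_right 0. norm (g x * v x) \<le> \<bar>g x\<bar> * B"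
    using eventually_at_right_real[OF assms(2)]
    by eventually_elim (use assms(3) in \<open>auto simp: abs_mult intro: mult_left_mono\<close>)
  have "((\<lambda>x. \<bar>g x\<bar>) \<longlongrightarrow> 0) (at_right 0)" using tendsto_rabs_zero[OF assms(1)] .
  then show "((\<lambda>x. \<bar>g x\<bar> * B) \<longlongrightarrow> 0) (at_right 0)" by (rule tendsto_mult_left_zero)
qed

lemma asym:
  fixes rf pf R P Ra Rb Pa Pb :: "real \<Rightarrow> real"
  assumes a: "0 < a" "a < 5" and dl: "0 < \<delta>"
  and eqR: "\<And>h. 0<h \<Longrightarrow> h<\<delta> \<Longrightarrow> rf (E0 - h) = h powr a * R h"
  and eqP: "\<And>h. 0<h \<Longrightarrow> h<\<delta> \<Longrightarrow> pf (E0 - h) = h powr (a+1) * P h"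
  and dR: "\<And>h. 0<h \<Longrightarrow> h<\<delta> \<Longrightarrow> (R has_real_derivative Ra h) (at h)"
  and dR1: "\<And>h. 0<h \<Longrightarrow> h<\<delta> \<Longrightarrow> (Ra has_real_derivative Rb h) (at h)"
  and dP: "\<And>h. 0<h \<Longrightarrow> h<\<delta> \<Longrightarrow> (P has_real_derivative Pa h) (at h)"
  and dP1: "\<And>h. 0<h \<Longrightarrow> h<\<delta> \<Longrightarrow> (Pa has_real_derivative Pb h) (at h)"
  and lR: "(R \<longlongrightarrow> Rz) (at_right 0)" "Rz > 0"
  and lP: "(P \<longlongrightarrow> Pz) (at_right 0)" "Pz > 0"
  and bnd: "\<And>h. 0<h \<Longrightarrow> h<\<delta> \<Longrightarrow> \<bar>Ra h\<bar> \<le> B \<and> \<bar>Rb h\<bar> \<le> B \<and> \<bar>Pa h\<bar> \<le> B \<and> \<bar>Pb h\<bar> \<le> B"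
  shows "filterlim (Ig rf pf) at_bot (at_left E0)"
proof -
  define r1 where "r1 h = a * R h + h * Ra h" for h
  define q1 where "q1 h = (a+1) * P h + h * Pa h" for h
  define r2 where "r2 h = a*(a-1)*R h + 2*a*(h*Ra h) + h^2*Rb h" for h
  define q2 where "q2 h = (a+1)*a*P h + 2*(a+1)*(h*Pa h) + h^2*Pb h" for h
  define Rt where "Rt h = h powr a * R h" for h
  define Pt where "Pt h = h powr (a+1) * P h" for h
  define D1r where "D1r h = (h powr a / h) * (a * R h + h * Ra h)" for h
  define D1p where "D1p h = (h powr (a+1) / h) * ((a+1) * P h + h * Pa h)" for h
  define D2r where "D2r h = (h powr a / h^2) * (a*(a-1)*R h + 2*a*h*Ra h + h^2*Rb h)" for h
  define D2p where "D2p h = (h powr (a+1) / h^2) * ((a+1)*(a+1-1)*P h + 2*(a+1)*h*Pa h + h^2*Pb h)" for h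
  define Fn where "Fn h = Rt h + Pt h" for h
  define Fd where "Fd h = Rt h + 3 * Pt h" for h
  define k where "k h = Fn h / Fd h * (D1r h / D1p h)" for h
  define Fp where "Fp h = ((D1r h + D1p h) * Fd h - Fn h * (D1r h + 3 * D1p h)) / (Fd h * Fd h)" for h
  define Qp where "Qp h = (D2r h * D1p h - D1r h * D2p h) / (D1p h * D1p h)" for h
  define k' where "k' h = Fp h * (D1r h / D1p h) + Qp h * (Fn h / Fd h)" for h
  have B0: "0 \<le> B" using bnd[of "\<delta>/2"] dl by fastforce
  have "eventually (\<lambda>h. R h > Rz/2) (at_right 0)" using order_tendstoD(1)[OF lR(1), of "Rz/2"] lR(2) by simp
  moreover have "eventually (\<lambda>h. P h > Pz/2) (at_right 0)" using order_tendstoD(1)[OF lP(1), of "Pz/2"] lP(2) by simp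
  moreover have "eventually (\<lambda>h. h < \<delta>) (at_right 0)" 
    using order_tendstoD(2)[OF tendsto_ident_at dl] by simp
  moreover have "eventually (\<lambda>h. h*(B+1) < (a+1)*Pz/2) (at_right 0)"
  proof -
    have "((\<lambda>h. h*(B+1)) \<longlongrightarrow> 0*(B+1)) (at_right (0::real))" by (intro tendsto_intros)
    moreover have "0*(B+1) < (a+1)*Pz/2" using a lP(2) by simp
    ultimately show ?thesis by (rule order_tendstoD(2))
  qed
  ultimately have "eventually (\<lambda>h. R h > Rz/2 \<and> P h > Pz/2 \<and> h < \<delta> \<and> h*(B+1) < (a+1)*Pz/2) (at_right 0)"
    by eventually_elim auto
  then obtain \<delta>1 where d1: "\<delta>1 > 0" and 
     EV: "\<And>h. 0 < h \<Longrightarrow> h < \<delta>1 \<Longrightarrow> R h > Rz/2 \<and> P h > Pz/2 \<and> h < \<delta> \<and> h*(B+1) < (a+1)*Pz/2"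
    unfolding eventually_at_right_field by auto
  have q1pos: "q1 h > 0" if "0 < h" "h < \<delta>1" for h
  proof -
    have e: "R h > Rz/2 \<and> P h > Pz/2 \<and> h < \<delta> \<and> h*(B+1) < (a+1)*Pz/2" using EV that by blast
    have "\<bar>Pa h\<bar> \<le> B" using bnd[of h] e that by blast
    then have "h * Pa h \<ge> - (h*(B+1))" using that
      by (smt (verit, ccfv_SIG) abs_le_D2 mult_left_mono mult_minus_right)
    moreover have "(a+1) * P h > (a+1)*Pz/2" using e a by (simp add: mult_strict_left_mono)
    ultimately show ?thesis unfolding q1_def using e by linarith
  qed
  have derivs: "(Rt has_real_derivative D1r h) (at h) \<and> (Pt has_real_derivative D1p h) (at h) \<and>
      (D1r has_real_derivative D2r h) (at h) \<and> (D1p has_real_derivative D2p h) (at h)"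
    if "0 < h" "h < \<delta>" for h
    unfolding Rt_def[abs_def] Pt_def[abs_def] D1r_def[abs_def] D1p_def[abs_def] D2r_def D2p_def
    using powr_prod_deriv[OF that(1) dR[OF that]] powr_prod_deriv[OF that(1) dP[OF that]]
      powr_prod_deriv2[OF that(1) dR[OF that] dR1[OF that]] powr_prod_deriv2[OF that(1) dP[OF that] dP1[OF that]]
    by blast
  have nzs: "h powr a > 0 \<and> R h > 0 \<and> P h > 0 \<and> q1 h > 0 \<and> h < \<delta>" if "0 < h" "h < \<delta>1" for h
    using EV[OF that] q1pos[OF that] lR(2) lP(2) that by auto
  have alg: "Rt h = h powr a * R h \<and> Pt h = h powr a * h * P h \<and> D1r h = h powr a / h * r1 h \<and>
     D1p h = h powr a * q1 h \<and> D2r h = h powr a / h^2 * r2 h \<and> D2p h = h powr a / h * q2 h"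
    if "0 < h" for h
  proof -
    have "h powr (a+1) = h powr a * h" using that by (simp add: powr_add)
    then show ?thesis using that
      by (simp add: Rt_def Pt_def D1r_def D1p_def D2r_def D2p_def r1_def q1_def r2_def q2_def
          field_simps power2_eq_square)
  qed
  have dk: "(k has_real_derivative k' h) (at h)" if "0 < h" "h < \<delta>1" for h
  proof -
    note n = nzs[OF that]
    note d = derivs[OF that(1) conjunct2[OF conjunct2[OF conjunct2[OF conjunct2[OF n]]]]]
    note al = alg[OF that(1)]
    have t: "h powr a > 0" using that by simp
    have "Fd h = h powr a * R h + 3*(h powr a * h * P h)" using al Fd_def by simp
    also have "\<dots> > 0" by (intro add_pos_pos mult_pos_pos) (use t n that in auto)
    finally have Fdnz: "Fd h \<noteq> 0" by simp
    have D1pnz: "D1p h \<noteq> 0" using n al by simp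
    have dFn: "(Fn has_real_derivative D1r h + D1p h) (at h)"
      unfolding Fn_def[abs_def] using d by (intro DERIV_add) auto
    have dFd: "(Fd has_real_derivative D1r h + 3 * D1p h) (at h)"
      unfolding Fd_def[abs_def] using d by (intro DERIV_add DERIV_cmult) auto
    have dF: "((\<lambda>x. Fn x / Fd x) has_real_derivative Fp h) (at h)"
      unfolding Fp_def by (rule DERIV_divide[OF dFn dFd Fdnz])
    have dQ: "((\<lambda>x. D1r x / D1p x) has_real_derivative Qp h) (at h)"
      unfolding Qp_def using d D1pnz by (intro DERIV_divide) auto
    show ?thesis unfolding k_def[abs_def] k'_def using DERIV_mult[OF dF dQ] by simp
  qed
  define T where "T = {E0-\<delta>1<..<E0}"
  have oT: "open T" by (simp add: T_def)
  have hT: "0 < E0 - W \<and> E0 - W < \<delta>1 \<and> E0 - W < \<delta>" if "W \<in> T" for W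
    using that nzs[of "E0 - W"] unfolding T_def by auto
  have rfT: "rf W = Rt (E0 - W)" "pf W = Pt (E0 - W)" if "W \<in> T" for W
    using hT[OF that] eqR[of "E0 - W"] eqP[of "E0 - W"] by (auto simp: Rt_def Pt_def)
  have drf: "deriv rf V = - D1r (E0 - V)" "deriv pf V = - D1p (E0 - V)" if "V \<in> T" for V
    using deriv_reflect[where G=Rt and g=rf, OF _ oT that] deriv_reflect[where G=Pt and g=pf, OF _ oT that]
       derivs[of "E0 - V"] hT[OF that] rfT by (auto intro!: DERIV_imp_deriv)
  have kT: "kap rf pf W = k (E0 - W)" if "W \<in> T" for W
    using rfT[OF that] drf[OF that] by (simp add: kap_def k_def Fn_def Fd_def)
  have dkap: "deriv (kap rf pf) V = - k' (E0 - V)" if "V \<in> T" for V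
    using deriv_reflect[where g="kap rf pf", OF dk oT that] hT[OF that] kT by (auto intro!: DERIV_imp_deriv)
  have IgT: "Ig rf pf (E0 - h) = 1/5 * (k h)^2 + 2 * k h + Fn h * (k' h / D1p h)"
    if "0 < h" "h < \<delta>1" for h
  proof -
    have "E0 - h \<in> T" using that by (simp add: T_def)
    then show ?thesis
      using kT dkap drf rfT by (simp add: Ig_def Fn_def)
  qed
  define f where "f h = (R h + h * P h) / (R h + 3 * (h * P h))" for h
  define g where "g h = R h + h * P h" for h
  define Fr where "Fr h = 2 * (r1 h * P h - R h * q1 h) / (R h + 3 * (h * P h))^2" for h
  define hFp where "hFp h = h * Fr h" for h
  define Phi where "Phi h = (f h * r1 h / q1 h)^2 / 5 + 2 * h * (f h * r1 h / q1 h) + g h / q1 h *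
      (hFp h * r1 h / q1 h + f h * ((r2 h * q1 h - r1 h * q2 h) / (q1 h)^2))" for h
  have IPhi: "Ig rf pf (E0 - h) = Phi h * (1 / h^2)" if "0 < h" "h < \<delta>1" for h
  proof -
    note n = nzs[OF that]
    note al = alg[OF that(1)]
    have t: "h powr a > 0" using that by simp
    have Rp: "R h + 3 * (h * P h) > 0" using n that by (intro add_pos_pos) auto
    have q: "q1 h \<noteq> 0" using n by simp
    show ?thesis unfolding IgT[OF that] k'_def k_def Fp_def Qp_def Phi_def hFp_def f_def g_def Fr_def
      by (rule alg_main[OF t that(1) Rp refl q]) (use al in \<open>simp_all add: Fn_def Fd_def algebra_simps\<close>)
  qed
  have lhR1: "((\<lambda>h. h * Ra h) \<longlongrightarrow> 0) (at_right 0)"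
    by (rule null_bound[OF tendsto_ident_at dl]) (use bnd in blast)
  have lhP1: "((\<lambda>h. h * Pa h) \<longlongrightarrow> 0) (at_right 0)"
    by (rule null_bound[OF tendsto_ident_at dl]) (use bnd in blast)
  have h2: "((\<lambda>h::real. h^2) \<longlongrightarrow> 0) (at_right 0)"
    using tendsto_power[OF tendsto_ident_at[of "0::real" "{0<..}"], of 2] by simp
  have lhR2: "((\<lambda>h. h^2 * Rb h) \<longlongrightarrow> 0) (at_right 0)"
    by (rule null_bound[OF h2 dl]) (use bnd in blast)
  have lhP2: "((\<lambda>h. h^2 * Pb h) \<longlongrightarrow> 0) (at_right 0)"
    by (rule null_bound[OF h2 dl]) (use bnd in blast)
  have lhP: "((\<lambda>h. h * P h) \<longlongrightarrow> 0 * Pz) (at_right 0)"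
    by (rule tendsto_mult[OF tendsto_ident_at lP(1)])
  have lr1: "(r1 \<longlongrightarrow> a*Rz) (at_right 0)"
    using tendsto_add[OF tendsto_mult[OF tendsto_const lR(1)] lhR1, of a]
    unfolding r1_def[abs_def] by simp
  have lq1: "(q1 \<longlongrightarrow> (a+1)*Pz) (at_right 0)"
    using tendsto_add[OF tendsto_mult[OF tendsto_const lP(1)] lhP1, of "a+1"]
    unfolding q1_def[abs_def] by simp
  have lr2: "(r2 \<longlongrightarrow> a*(a-1)*Rz) (at_right 0)"
    using tendsto_add[OF tendsto_add[OF tendsto_mult[OF tendsto_const lR(1)] tendsto_mult[OF tendsto_const lhR1]] lhR2,
       of "a*(a-1)" "2*a"]
    unfolding r2_def[abs_def] by simp
  have lq2: "(q2 \<longlongrightarrow> (a+1)*a*Pz) (at_right 0)"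
    using tendsto_add[OF tendsto_add[OF tendsto_mult[OF tendsto_const lP(1)] tendsto_mult[OF tendsto_const lhP1]] lhP2,
       of "(a+1)*a" "2*(a+1)"]
    unfolding q2_def[abs_def] by simp
  have lden: "((\<lambda>h. R h + 3 * (h * P h)) \<longlongrightarrow> Rz + 3 * (0 * Pz)) (at_right 0)"
    by (rule tendsto_add[OF lR(1) tendsto_mult[OF tendsto_const lhP]])
  have lf: "(f \<longlongrightarrow> 1) (at_right 0)"
    using tendsto_divide[OF tendsto_add[OF lR(1) lhP] lden] lR(2) unfolding f_def[abs_def] by simp
  have lg: "(g \<longlongrightarrow> Rz) (at_right 0)"
    using tendsto_add[OF lR(1) lhP] unfolding g_def[abs_def] by simp
  have lFr: "(Fr \<longlongrightarrow> 2 * (a*Rz * Pz - Rz * ((a+1)*Pz)) / (Rz + 3 * (0 * Pz))^2) (at_right 0)"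
    unfolding Fr_def[abs_def]
    by (rule tendsto_divide[OF tendsto_mult[OF tendsto_const tendsto_diff[OF tendsto_mult[OF lr1 lP(1)] tendsto_mult[OF lR(1) lq1]]]
       tendsto_power[OF lden]]) (use lR(2) in simp)
  have lhFp: "(hFp \<longlongrightarrow> 0) (at_right 0)"
    using tendsto_mult[OF tendsto_ident_at lFr] unfolding hFp_def[abs_def] by simp
  have lPhi: "(Phi \<longlongrightarrow> a*Rz^2/((a+1)^2*Pz^2) * (a/5 - 1)) (at_right 0)"
    unfolding Phi_def[abs_def]
    by (rule Phi_lim[OF lf lr1 lq1 lhFp lg lr2 lq2 tendsto_ident_at a lR(2) lP(2)])
  have Lneg: "a*Rz^2/((a+1)^2*Pz^2) * (a/5 - 1) < 0"
    using a lR(2) lP(2) by (intro mult_pos_neg) auto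
  have inf: "filterlim (\<lambda>h::real. 1 / h^2) at_top (at_right 0)"
  proof -
    have "eventually (\<lambda>h::real. 0 < h^2) (at_right 0)"
      using eventually_at_right_less[of "0::real"] by eventually_elim simp
    from filterlim_inverse_at_top[OF h2 this] show ?thesis by (simp add: inverse_eq_divide)
  qed
  have "filterlim (\<lambda>h. Phi h * (1 / h^2)) at_bot (at_right 0)"
    by (rule filterlim_tendsto_neg_mult_at_bot[OF lPhi Lneg inf])
  moreover have ev: "eventually (\<lambda>h. Phi h * (1 / h^2) = Ig rf pf (E0 - h)) (at_right 0)"
    using eventually_at_right_real[OF d1] by eventually_elim (use IPhi in auto)
  ultimately have "filterlim (\<lambda>h. Ig rf pf (E0 - h)) at_bot (at_right 0)"
    using filterlim_cong[OF refl refl ev] by simp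
  then show ?thesis unfolding at_left_reflect filterlim_filtermap .
qed



definition C2 :: "real set \<Rightarrow> (real\<Rightarrow>real\<Rightarrow>real) \<Rightarrow> (real\<Rightarrow>real\<Rightarrow>real) \<Rightarrow> (real\<Rightarrow>real\<Rightarrow>real) \<Rightarrow> bool" where
"C2 U G G1 G2 \<longleftrightarrow> (\<forall>h\<in>U. \<forall>u\<in>{0..1}. ((\<lambda>h. G h u) has_real_derivative G1 h u) (at h) \<and>
      ((\<lambda>h. G1 h u) has_real_derivative G2 h u) (at h)) \<and>
   continuous_on (U \<times> {0..1}) (\<lambda>p. G (fst p) (snd p)) \<and>
   continuous_on (U \<times> {0..1}) (\<lambda>p. G1 (fst p) (snd p)) \<and>
   continuous_on (U \<times> {0..1}) (\<lambda>p. G2 (fst p) (snd p))"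

lemma C2_mult:
  assumes "C2 U G G1 G2" "C2 U H H1 H2"
  shows "C2 U (\<lambda>h u. G h u * H h u) (\<lambda>h u. G1 h u * H h u + G h u * H1 h u)
     (\<lambda>h u. G2 h u * H h u + 2 * (G1 h u * H1 h u) + G h u * H2 h u)"
proof -
  have d: "((\<lambda>h. G h u * H h u) has_real_derivative G1 h u * H h u + G h u * H1 h u) (at h) \<and>
     ((\<lambda>h. G1 h u * H h u + G h u * H1 h u) has_real_derivative
        G2 h u * H h u + 2 * (G1 h u * H1 h u) + G h u * H2 h u) (at h)"
    if "h \<in> U" "u \<in> {0..1}" for h u
  proof -
    have a: "((\<lambda>h. G h u) has_real_derivative G1 h u) (at h)" "((\<lambda>h. G1 h u) has_real_derivative G2 h u) (at h)"
      "((\<lambda>h. H h u) has_real_derivative H1 h u) (at h)" "((\<lambda>h. H1 h u) has_real_derivative H2 h u) (at h)"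
      using assms that unfolding C2_def by auto
    show ?thesis
      by (intro conjI) (rule derivative_eq_intros a refl | simp add: algebra_simps)+
  qed
  show ?thesis using assms d unfolding C2_def
    by (auto intro!: continuous_intros)
qed

lemma cont_snd_comp: "continuous_on {0..1} c \<Longrightarrow> continuous_on (U \<times> {0..1}) (\<lambda>p. c (snd p))"
  by (rule continuous_on_compose2[OF _ continuous_on_snd]) auto

lemma cont_fst_comp: "continuous_on U m \<Longrightarrow> continuous_on (U \<times> {0..1::real}) (\<lambda>p. m (fst p))"
  by (rule continuous_on_compose2[OF _ continuous_on_fst]) auto

lemma C2_const:
  assumes "continuous_on {0..1} c"
  shows "C2 U (\<lambda>h u. c u) (\<lambda>h u. 0) (\<lambda>h u. 0)"
  unfolding C2_def using cont_snd_comp[OF assms] by auto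

lemma C2_hfun:
  assumes "\<And>h. h \<in> U \<Longrightarrow> (m has_real_derivative m1 h) (at h) \<and> (m1 has_real_derivative m2 h) (at h)"
    "continuous_on U m2"
  shows "C2 U (\<lambda>h u. m h) (\<lambda>h u. m1 h) (\<lambda>h u. m2 h)"
proof -
  have "continuous_on U m" "continuous_on U m1"
    using assms(1) by (auto intro!: continuous_at_imp_continuous_on DERIV_isCont)
  then show ?thesis unfolding C2_def using assms cont_fst_comp by auto
qed

lemma C2_lin:
  assumes "continuous_on {0..1} bt"
  shows "C2 U (\<lambda>h u. c - h * bt u) (\<lambda>h u. - bt u) (\<lambda>h u. 0)"
  unfolding C2_def using cont_snd_comp[OF assms]
  by (auto intro!: derivative_eq_intros continuous_intros)

lemma C2_sqrtlin:
  assumes "continuous_on {0..1} bt" "\<And>h u. h \<in> U \<Longrightarrow> u \<in> {0..1} \<Longrightarrow> c - h * bt u > 0"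
  shows "C2 U (\<lambda>h u. sqrt (c - h * bt u)) (\<lambda>h u. - bt u / (2 * sqrt (c - h * bt u)))
     (\<lambda>h u. - (bt u * bt u) / (4 * ((c - h * bt u) * sqrt (c - h * bt u))))"
proof -
  have cb: "continuous_on (U \<times> {0..1}) (\<lambda>p. bt (snd p))" using cont_snd_comp[OF assms(1)] .
  have pos: "\<And>p. p \<in> U \<times> {0..1} \<Longrightarrow> c - fst p * bt (snd p) > 0" using assms(2) by auto
  have d: "((\<lambda>h. sqrt (c - h * bt u)) has_real_derivative - bt u / (2 * sqrt (c - h * bt u))) (at h) \<and>
     ((\<lambda>h. - bt u / (2 * sqrt (c - h * bt u))) has_real_derivative
       - (bt u * bt u) / (4 * ((c - h * bt u) * sqrt (c - h * bt u)))) (at h)"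
    if "h \<in> U" "u \<in> {0..1}" for h u
  proof -
    have p: "c - h * bt u > 0" using assms(2) that by auto
    show ?thesis using p
      by (intro conjI) (rule derivative_eq_intros refl | simp add: field_simps power2_eq_square)+
  qed
  have nz: "\<And>p. p \<in> U \<times> {0..1} \<Longrightarrow> sqrt (c - fst p * bt (snd p)) > 0" using pos by simp
  have c1: "continuous_on (U \<times> {0..1}) (\<lambda>p. sqrt (c - fst p * bt (snd p)))"
    by (intro continuous_intros cb)
  have c2: "continuous_on (U \<times> {0..1}) (\<lambda>p. - bt (snd p) / (2 * sqrt (c - fst p * bt (snd p))))"
    by (intro continuous_intros cb) (use nz in force)
  have c3: "continuous_on (U \<times> {0..1}) (\<lambda>p. - (bt (snd p) * bt (snd p)) /
       (4 * ((c - fst p * bt (snd p)) * sqrt (c - fst p * bt (snd p)))))"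
    by (intro continuous_intros cb) (use nz pos in force)
  show ?thesis unfolding C2_def using d c1 c2 c3 by auto
qed

lemma C2_chi:
  fixes chi chi1 chi2 :: "real \<Rightarrow> real"
  assumes "\<forall>x. \<bar>x\<bar> < r \<longrightarrow> (chi has_real_derivative chi1 x) (at x)"
    "\<forall>x. \<bar>x\<bar> < r \<longrightarrow> (chi1 has_real_derivative chi2 x) (at x)"
    "continuous_on {-r<..<r} chi2" "E0 > 0" "\<And>h. h \<in> U \<Longrightarrow> \<bar>h\<bar> < r * E0"
  shows "C2 U (\<lambda>h u. chi (h*u/E0)) (\<lambda>h u. chi1 (h*u/E0) * (u/E0)) (\<lambda>h u. chi2 (h*u/E0) * (u/E0)^2)"
proof -
  have inr: "\<bar>h*u/E0\<bar> < r" if "h \<in> U" "u \<in> {0..1}" for h u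
  proof -
    have "\<bar>h*u/E0\<bar> = \<bar>h\<bar> * u / E0" using that assms(4) by (simp add: abs_mult)
    also have "\<dots> \<le> \<bar>h\<bar> / E0" using that assms(4) by (simp add: divide_right_mono mult_left_le)
    also have "\<dots> < r" using assms(5)[OF that(1)] assms(4) by (simp add: field_simps)
    finally show ?thesis .
  qed
  have c0: "continuous_on {-r<..<r} chi" "continuous_on {-r<..<r} chi1"
  proof -
    have "isCont chi x \<and> isCont chi1 x" if "x \<in> {-r<..<r}" for x
    proof -
      have "\<bar>x\<bar> < r" using that by auto
      then show ?thesis using assms(1,2) DERIV_isCont by blast
    qed
    then show "continuous_on {-r<..<r} chi" "continuous_on {-r<..<r} chi1"
      by (auto intro!: continuous_at_imp_continuous_on)
  qed
  have img: "(\<lambda>p. fst p * snd p / E0) ` (U \<times> {0..1}) \<subseteq> {-r<..<r}"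
  proof
    fix y assume "y \<in> (\<lambda>p. fst p * snd p / E0) ` (U \<times> {0..1})"
    then obtain p where p: "p \<in> U \<times> {0..1}" "y = fst p * snd p / E0" by blast
    then have "\<bar>y\<bar> < r" using inr[of "fst p" "snd p"] by (auto simp del: abs_divide)
    then show "y \<in> {-r<..<r}" by (simp add: abs_less_iff)
  qed
  have cc: "continuous_on (U \<times> {0..1}) (\<lambda>p. f (fst p * snd p / E0))" if "continuous_on {-r<..<r} f" for f
    by (rule continuous_on_compose2[OF that _ img]) (use assms(4) in \<open>auto intro!: continuous_intros\<close>)
  have d: "((\<lambda>h. chi (h*u/E0)) has_real_derivative chi1 (h*u/E0) * (u/E0)) (at h) \<and>
     ((\<lambda>h. chi1 (h*u/E0) * (u/E0)) has_real_derivative chi2 (h*u/E0) * (u/E0)^2) (at h)"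
    if "h \<in> U" "u \<in> {0..1}" for h u
  proof -
    have a: "(chi has_real_derivative chi1 (h*u/E0)) (at (h*u/E0))"
        "(chi1 has_real_derivative chi2 (h*u/E0)) (at (h*u/E0))"
      using assms(1,2) inr[OF that] by auto
    have l: "((\<lambda>h. h*u/E0) has_real_derivative u/E0) (at h)"
      using assms(4) by (auto intro!: derivative_eq_intros)
    show ?thesis
      using DERIV_chain2[OF a(1) l] DERIV_cmult_right[OF DERIV_chain2[OF a(2) l], of "u/E0"]
      by (simp add: power2_eq_square mult_ac)
  qed
  show ?thesis unfolding C2_def using d cc[OF c0(1)] cc[OF c0(2)] cc[OF assms(3)] assms(4)
    by (auto intro!: continuous_intros)
qed

lemma C2_integral:
  assumes C: "C2 U K K1 K2" and U: "U = {-c<..<c}" "0 < c"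
  shows "\<And>h. h \<in> U \<Longrightarrow> ((\<lambda>h. integral {0..1} (K h)) has_real_derivative integral {0..1} (K1 h)) (at h)"
    and "\<And>h. h \<in> U \<Longrightarrow> ((\<lambda>h. integral {0..1} (K1 h)) has_real_derivative integral {0..1} (K2 h)) (at h)"
    and "\<exists>B. \<forall>h\<in>{-c/2..c/2}. \<bar>integral {0..1} (K1 h)\<bar> \<le> B \<and> \<bar>integral {0..1} (K2 h)\<bar> \<le> B"
proof -
  have oU: "open U" "convex U" unfolding U(1) by simp_all
  have cK: "continuous_on (U \<times> {0..1}) (\<lambda>p. K (fst p) (snd p))"
     "continuous_on (U \<times> {0..1}) (\<lambda>p. K1 (fst p) (snd p))"
     "continuous_on (U \<times> {0..1}) (\<lambda>p. K2 (fst p) (snd p))" using C unfolding C2_def by blast+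
  have ci: "continuous_on {0..1} (F x)" if "x \<in> U" "continuous_on (U \<times> {0..1}) (\<lambda>p. F (fst p) (snd p))" for F :: "real \<Rightarrow> real \<Rightarrow> real" and x :: real
    by (rule continuous_on_compose2[OF that(2), of _ "\<lambda>u. (x, u)", simplified])
       (use that in \<open>auto intro!: continuous_intros\<close>)
  have cs: "(\<lambda>(x, t). F x t) = (\<lambda>p. F (fst p) (snd p))" for F :: "real \<Rightarrow> real \<Rightarrow> real"
    by (simp add: case_prod_unfold)
  have lb: "((\<lambda>h. integral {0..1} (F h)) has_real_derivative integral {0..1} (F1 h)) (at h)"
    if hU0: "h \<in> U" and dF: "\<And>h u. h \<in> U \<Longrightarrow> u \<in> {0..1} \<Longrightarrow> ((\<lambda>h. F h u) has_real_derivative F1 h u) (at h)"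
      and cF: "continuous_on (U \<times> {0..1}) (\<lambda>p. F (fst p) (snd p))"
      and cF1: "continuous_on (U \<times> {0..1}) (\<lambda>p. F1 (fst p) (snd p))" for F F1 :: "real \<Rightarrow> real \<Rightarrow> real" and h
  proof -
    have d2: "((\<lambda>x. F x t) has_field_derivative F1 x t) (at x within U)"
      if xt: "x \<in> U" "t \<in> cbox (0::real) 1" for x t
    proof -
      have "t \<in> {0..1}" using xt(2) by simp
      then show ?thesis by (rule has_field_derivative_at_within[OF dF[OF xt(1)]])
    qed
    have i2: "F x integrable_on cbox 0 1" if x: "x \<in> U" for x
    proof -
      have "continuous_on {0..1} (F x)" by (rule ci[OF x cF])
      from integrable_continuous_real[OF this] show ?thesis by simp
    qed
    have c2: "continuous_on (U \<times> cbox 0 1) (\<lambda>(x, t). F1 x t)"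
    proof -
      have "U \<times> cbox 0 1 = U \<times> {0..1::real}" by simp
      then show ?thesis using cF1 cs[of F1] by simp
    qed
    have L: "((\<lambda>h. integral (cbox 0 1) (F h)) has_field_derivative integral (cbox 0 1) (F1 h)) (at h within U)"
      by (rule leibniz_rule_field_derivative[where f=F and fx=F1 and U=U and a=0 and b=1,
            OF d2 i2 c2 hU0 oU(2)])
    have "at h within U = at h" by (rule at_within_open[OF hU0 oU(1)])
    then show ?thesis using L by simp
  qed
  have dK: "\<And>h u. h \<in> U \<Longrightarrow> u \<in> {0..1} \<Longrightarrow> ((\<lambda>h. K h u) has_real_derivative K1 h u) (at h)"
    "\<And>h u. h \<in> U \<Longrightarrow> u \<in> {0..1} \<Longrightarrow> ((\<lambda>h. K1 h u) has_real_derivative K2 h u) (at h)"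
    using C unfolding C2_def by blast+
  show "\<And>h. h \<in> U \<Longrightarrow> ((\<lambda>h. integral {0..1} (K h)) has_real_derivative integral {0..1} (K1 h)) (at h)"
    by (rule lb[OF _ dK(1) cK(1) cK(2)])
  show "\<And>h. h \<in> U \<Longrightarrow> ((\<lambda>h. integral {0..1} (K1 h)) has_real_derivative integral {0..1} (K2 h)) (at h)"
    by (rule lb[OF _ dK(2) cK(2) cK(3)])
  have sub: "{-c/2..c/2} \<times> {0..1} \<subseteq> U \<times> {0..1::real}" using U by auto
  have cpt: "compact ({-c/2..c/2} \<times> {0..1::real})" by (intro compact_Times) auto
  obtain B1 where B1': "B1 \<ge> 0" "\<And>p. p \<in> {-c/2..c/2} \<times> {0..1} \<Longrightarrow> norm (K1 (fst p) (snd p)) \<le> B1"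
    using continuous_on_compact_bound[OF cpt continuous_on_subset[OF cK(2) sub]] by blast
  obtain B2 where B2': "B2 \<ge> 0" "\<And>p. p \<in> {-c/2..c/2} \<times> {0..1} \<Longrightarrow> norm (K2 (fst p) (snd p)) \<le> B2"
    using continuous_on_compact_bound[OF cpt continuous_on_subset[OF cK(3) sub]] by blast
  note B1 = B1'(2,1)
  note B2 = B2'(2,1)
  have bd: "\<bar>integral {0..1} (F h)\<bar> \<le> B" if "h \<in> {-c/2..c/2}" "B \<ge> 0"
     "\<And>u. u \<in> {0..1} \<Longrightarrow> \<bar>F h u\<bar> \<le> B" "continuous_on {0..1} (F h)" for F :: "real \<Rightarrow> real \<Rightarrow> real" and h B :: real
  proof -
    have "(F h has_integral integral {0..1} (F h)) (cbox 0 1)"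
      using integrable_continuous_real[OF that(4)] by (simp add: integrable_integral)
    from has_integral_bound[OF that(2) this] that(3) show ?thesis by simp
  qed
  have hU: "h \<in> U" if "h \<in> {-c/2..c/2}" for h using that U by auto
  show "\<exists>B. \<forall>h\<in>{-c/2..c/2}. \<bar>integral {0..1} (K1 h)\<bar> \<le> B \<and> \<bar>integral {0..1} (K2 h)\<bar> \<le> B"
  proof (intro exI[of _ "max B1 B2"] ballI conjI)
    fix h assume h: "h \<in> {-c/2..c/2}"
    have b1: "\<bar>K1 h u\<bar> \<le> max B1 B2" if "u \<in> {0..1}" for u
    proof -
      have "norm (K1 (fst (h,u)) (snd (h,u))) \<le> B1" by (rule B1(1)) (use h that in auto)
      then show ?thesis by simp
    qed
    have b2: "\<bar>K2 h u\<bar> \<le> max B1 B2" if "u \<in> {0..1}" for u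
    proof -
      have "norm (K2 (fst (h,u)) (snd (h,u))) \<le> B2" by (rule B2(1)) (use h that in auto)
      then show ?thesis by simp
    qed
    have m0: "0 \<le> max B1 B2" using B1(2) by simp
    show "\<bar>integral {0..1} (K1 h)\<bar> \<le> max B1 B2"
      by (rule bd[where F=K1, OF h m0 b1 ci[OF hU[OF h] cK(2)]])
    show "\<bar>integral {0..1} (K2 h)\<bar> \<le> max B1 B2"
      by (rule bd[where F=K2, OF h m0 b2 ci[OF hU[OF h] cK(3)]])
  qed
qed



lemma int_subst:
  fixes f :: "real \<Rightarrow> real"
  assumes h: "h > 0" and c: "continuous_on {0..1} (\<lambda>u. f (E0 - h*u))"
  shows "integral {E0-h..E0} f = h * integral {0..1} (\<lambda>u. f (E0 - h*u))"
proof -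
  define g where "g u = f (E0 - h*u)" for u
  have gi: "(g has_integral integral {0..1} g) (cbox 0 1)"
    using integrable_continuous_real[OF c] unfolding g_def by (simp add: integrable_integral)
  from has_integral_affinity[OF gi, of "-1/h" "E0/h"] h
  have "((\<lambda>x. g ((-1/h) * x + E0/h)) has_integral h * integral {0..1} g)
          ((\<lambda>x. (-h) * x + E0) ` {0..1})"
    by (simp add: field_simps)
  moreover have "(\<lambda>x. (-h) * x + E0) ` {0..1} = {E0-h..E0}"
    using h by (subst image_affinity_atLeastAtMost) auto
  moreover have "g ((-1/h) * x + E0/h) = f x" for x
    unfolding g_def using h by (simp add: field_simps)
  ultimately have "(f has_integral h * integral {0..1} g) {E0-h..E0}" by simp
  then show ?thesis unfolding g_def by (rule integral_unique)
qed

lemma powr_32: "(x::real) \<ge> 0 \<Longrightarrow> x powr (3/2) = x * sqrt x"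
proof -
  assume x: "x \<ge> 0"
  show ?thesis
  proof (cases "x = 0")
    case False
    have "x powr (1 + 1/2) = x powr 1 * x powr (1/2)" using powr_add[of x 1 "1/2"] .
    then show ?thesis using x False by (simp add: powr_half_sqrt)
  qed simp
qed

lemma powr_nhalf: "(h::real) > 0 \<Longrightarrow> h powr (real k + 1/2) = h^k * sqrt h"
  by (simp add: powr_add powr_realpow powr_half_sqrt)

lemma weight_pos:
  shows "0 < integral {0..1} (\<lambda>u::real. u^n * sqrt (1-u))"
    and "0 < integral {0..1} (\<lambda>u::real. u^n * ((1-u) * sqrt (1-u)))"
proof -
  define F where "F u = u^(n+1)/(n+1) - 2*u^(n+2)/(n+2) + u^(n+3)/(n+3)" for u :: real
  have "((\<lambda>u. u^n * (1-u)^2) has_integral (F 1 - F 0)) {0..1}"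
  proof (rule fundamental_theorem_of_calculus)
    fix x :: real assume "x \<in> {0..1}"
    have "(F has_real_derivative x^n * (1-x)^2) (at x)"
      unfolding F_def
      by (rule derivative_eq_intros refl | simp)+ (simp add: field_simps power2_eq_square)
    then show "(F has_vector_derivative x^n * (1-x)^2) (at x within {0..1})"
      by (simp add: has_real_derivative_iff_has_vector_derivative has_vector_derivative_at_within)
  qed simp
  moreover have "F 1 - F 0 > 0"
  proof -
    have "F 0 = 0" by (simp add: F_def)
    moreover have "F 1 = 1/(n+1) - 2/(n+2) + 1/(n+3)" by (simp add: F_def)
    moreover have "1/a - 2/b + 1/c > 0" if "a > 0" "b = a + 1" "c = a + 2" for a b c :: real
    proof -
      have p: "b > 0" "c > 0" using that by auto
      have "1/a - 2/b + 1/c = (b*c - 2*a*c + a*b)/(a*b*c)" using that(1) p by (simp add: field_simps)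
      also have "b*c - 2*a*c + a*b = 2" using that by (simp add: algebra_simps)
      finally show ?thesis using that(1) p by simp
    qed
    note this[of "real n + 1" "real n + 2" "real n + 3"]
    ultimately show ?thesis by (simp add: add.commute)
  qed
  ultimately have p: "integral {0..1} (\<lambda>u::real. u^n * (1-u)^2) > 0" "(\<lambda>u::real. u^n * (1-u)^2) integrable_on {0..1}"
    by (auto simp: integral_unique)
  have s: "(1-u)^2 \<le> sqrt (1-u)" "(1-u)^2 \<le> (1-u) * sqrt (1-u)" if "u \<in> {0..1}" for u :: real
  proof -
    have a: "0 \<le> 1-u" "1-u \<le> 1" using that by auto
    have "1 - u \<le> sqrt (1-u)" using a by (simp add: real_le_rsqrt power2_eq_square mult_left_le)
    then show "(1-u)^2 \<le> (1-u) * sqrt (1-u)" using a by (simp add: power2_eq_square mult_left_mono)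
    moreover have "(1-u) * sqrt (1-u) \<le> sqrt (1-u)" using a by (simp add: mult_left_le_one_le)
    ultimately show "(1-u)^2 \<le> sqrt (1-u)" by linarith
  qed
  have i1: "(\<lambda>u::real. u^n * sqrt (1-u)) integrable_on {0..1}"
    by (intro integrable_continuous_real continuous_intros)
  have i2: "(\<lambda>u::real. u^n * ((1-u) * sqrt (1-u))) integrable_on {0..1}"
    by (intro integrable_continuous_real continuous_intros)
  have "integral {0..1} (\<lambda>u::real. u^n * (1-u)^2) \<le> integral {0..1} (\<lambda>u::real. u^n * sqrt (1-u))"
    by (rule integral_le[OF p(2) i1]) (use s in \<open>auto intro: mult_left_mono\<close>)
  then show "0 < integral {0..1} (\<lambda>u::real. u^n * sqrt (1-u))" using p by linarith
  have "integral {0..1} (\<lambda>u::real. u^n * (1-u)^2) \<le> integral {0..1} (\<lambda>u::real. u^n * ((1-u) * sqrt (1-u)))"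
    by (rule integral_le[OF p(2) i2]) (use s in \<open>auto intro: mult_left_mono\<close>)
  then show "0 < integral {0..1} (\<lambda>u::real. u^n * ((1-u) * sqrt (1-u)))" using p by linarith
qed



lemma C2_slice:
  assumes "C2 U K K1 K2" "h \<in> U"
  shows "continuous_on {0..1} (K h)"
proof -
  have c: "continuous_on (U \<times> {0..1}) (\<lambda>p. K (fst p) (snd p))" using assms(1) unfolding C2_def by auto
  show ?thesis
    by (rule continuous_on_compose2[OF c, of _ "\<lambda>u. (h, u)", simplified])
       (use assms(2) in \<open>auto intro!: continuous_intros\<close>)
qed

theorem mainTheorem2:
  fixes phi :: "real \<Rightarrow> real" and E0 :: real and n :: nat
  assumes "E0 > 0" and "admissible_phi phi n" and "n \<le> 3"
  shows "filterlim (Iind phi E0) at_bot (at_left E0) \<and>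
         (\<exists>V0. 0 < V0 \<and> V0 < E0 \<and> (\<forall>V\<in>{V0..<E0}. Iind phi E0 V \<le> 0))"
proof -
  obtain r chi chi1 chi2 where ph: "0 < r" "r \<le> 1" "chi 0 > 0"
    "\<forall>x\<in>{0..<r}. phi x = x^n * chi x"
    "\<forall>x. \<bar>x\<bar> < r \<longrightarrow> (chi has_real_derivative chi1 x) (at x)"
    "\<forall>x. \<bar>x\<bar> < r \<longrightarrow> (chi1 has_real_derivative chi2 x) (at x)"
    "continuous_on {-r<..<r} chi2"
    using phi_factor[OF assms(2)] by blast
  have E0: "E0 > 0" by fact
  define d0 where "d0 = min (E0/2) (r*E0/2)"
  have d0: "0 < d0" "d0 \<le> E0/2" "d0 \<le> r*E0/2" using E0 ph(1) by (auto simp: d0_def)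
  define U where "U = {-d0<..<d0}"
  have hU: "\<bar>h\<bar> < r*E0 \<and> E0 - h > 0" if "h \<in> U" for h
    using that d0 ph(1) E0 by (auto simp: U_def abs_less_iff)
  have posW: "2*E0 - h*(1+u) > 0" if "h \<in> U" "u \<in> {0..1}" for h u
  proof -
    have "\<bar>h*(1+u)\<bar> \<le> \<bar>h\<bar> * 2" using that by (auto simp: abs_mult intro: mult_left_mono)
    moreover have "\<bar>h\<bar> < d0" using that by (auto simp: U_def)
    ultimately show ?thesis using d0 by linarith
  qed
  define m where "m h = 1/(E0-h)^4" for h
  define m1 where "m1 h = 4/(E0-h)^5" for h
  define m2 where "m2 h = 20/(E0-h)^6" for h
  have Cm: "C2 U (\<lambda>h u. m h) (\<lambda>h u. m1 h) (\<lambda>h u. m2 h)"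
  proof (rule C2_hfun)
    fix h assume "h \<in> U"
    then have nz: "E0 - h \<noteq> 0" using hU by force
    show "(m has_real_derivative m1 h) (at h) \<and> (m1 has_real_derivative m2 h) (at h)"
      unfolding m_def[abs_def] m1_def[abs_def] m2_def using nz
      by (intro conjI) (rule derivative_eq_intros refl | simp add: field_simps)+
  next
    show "continuous_on U m2" unfolding m2_def[abs_def] using hU
      by (intro continuous_intros) force
  qed
  define c0 where "c0 = 4*pi/E0^n"
  define w1 where "w1 u = c0 * (u^n * sqrt(1-u))" for u :: real
  define w2 where "w2 u = c0/3 * (u^n * ((1-u) * sqrt(1-u)))" for u :: real
  have Cw1: "C2 U (\<lambda>h u. w1 u) (\<lambda>h u. 0) (\<lambda>h u. 0)"
    by (rule C2_const) (unfold w1_def, intro continuous_intros)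
  have Cw2: "C2 U (\<lambda>h u. w2 u) (\<lambda>h u. 0) (\<lambda>h u. 0)"
    by (rule C2_const) (unfold w2_def, intro continuous_intros)
  have Cchi: "C2 U (\<lambda>h u. chi (h*u/E0)) (\<lambda>h u. chi1 (h*u/E0) * (u/E0)) (\<lambda>h u. chi2 (h*u/E0) * (u/E0)^2)"
    by (rule C2_chi[OF ph(5) ph(6) ph(7) E0]) (use hU in blast)
  have CL: "C2 U (\<lambda>h u. E0 - h*u) (\<lambda>h u. -u) (\<lambda>h u. 0)"
    using C2_lin[of "\<lambda>u. u" U E0] by (simp add: continuous_on_id)
  have CW: "C2 U (\<lambda>h u. 2*E0 - h*(1+u)) (\<lambda>h u. -(1+u)) (\<lambda>h u. 0)"
    using C2_lin[of "\<lambda>u. 1+u" U "2*E0"] by (simp add: continuous_intros)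
  have CS: "C2 U (\<lambda>h u. sqrt (2*E0 - h*(1+u))) (\<lambda>h u. - (1+u) / (2 * sqrt (2*E0 - h*(1+u))))
     (\<lambda>h u. - ((1+u) * (1+u)) / (4 * ((2*E0 - h*(1+u)) * sqrt (2*E0 - h*(1+u)))))"
    using C2_sqrtlin[of "\<lambda>u. 1+u" U "2*E0"] posW by (simp add: continuous_intros)
  define KR where "KR h u = m h * w1 u * chi (h*u/E0) * ((E0 - h*u) * (E0 - h*u)) * sqrt (2*E0 - h*(1+u))" for h u
  define KP where "KP h u = m h * w2 u * chi (h*u/E0) * (2*E0 - h*(1+u)) * sqrt (2*E0 - h*(1+u))" for h u
  have "\<exists>K1 K2. C2 U KR K1 K2" unfolding KR_def[abs_def]
    by (intro exI, rule C2_mult[OF C2_mult[OF C2_mult[OF C2_mult[OF Cm Cw1] Cchi] C2_mult[OF CL CL]] CS])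
  then obtain KR1 KR2 where CKR: "C2 U KR KR1 KR2" by blast
  have "\<exists>K1 K2. C2 U KP K1 K2" unfolding KP_def[abs_def]
    by (intro exI, rule C2_mult[OF C2_mult[OF C2_mult[OF C2_mult[OF Cm Cw2] Cchi] CW] CS])
  then obtain KP1 KP2 where CKP: "C2 U KP KP1 KP2" by blast
  note IR = C2_integral[OF CKR U_def d0(1)]
  note IP = C2_integral[OF CKP U_def d0(1)]
  obtain BR where BR: "\<forall>h\<in>{-d0/2..d0/2}. \<bar>integral {0..1} (KR1 h)\<bar> \<le> BR \<and> \<bar>integral {0..1} (KR2 h)\<bar> \<le> BR"
    using IR(3) by blast
  obtain BP where BP: "\<forall>h\<in>{-d0/2..d0/2}. \<bar>integral {0..1} (KP1 h)\<bar> \<le> BP \<and> \<bar>integral {0..1} (KP2 h)\<bar> \<le> BP"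
    using IP(3) by blast
  define R where "R h = integral {0..1} (KR h)" for h
  define R1 where "R1 h = integral {0..1} (KR1 h)" for h
  define R2 where "R2 h = integral {0..1} (KR2 h)" for h
  define P where "P h = integral {0..1} (KP h)" for h
  define P1 where "P1 h = integral {0..1} (KP1 h)" for h
  define P2 where "P2 h = integral {0..1} (KP2 h)" for h
  have inU: "h \<in> U" if "0 < h" "h < d0/2" for h using that d0 by (auto simp: U_def)
  have c0: "c0 > 0" using E0 by (simp add: c0_def)
  have rep: "rho phi E0 (E0 - h) = h powr (real n + 3/2) * R h \<and>
     pres phi E0 (E0 - h) = h powr (real n + 3/2 + 1) * P h"
    if h: "0 < h" "h < d0/2" for h
  proof -
    define V where "V = E0 - h"
    have V: "V > 0" using h d0 by (simp add: V_def)
    have mh: "m h = 1 / V^4" by (simp add: m_def V_def)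
    have hr: "h/E0 < r" using h d0 E0 by (simp add: field_simps)
    define Q where "Q u = u^n * sqrt(1-u) * chi (h*u/E0) * ((E0 - h*u) * (E0 - h*u)) * sqrt (2*E0 - h*(1+u))" for u
    define Qp where "Qp u = u^n * ((1-u) * sqrt (1-u)) * chi (h*u/E0) * (2*E0 - h*(1+u)) * sqrt (2*E0 - h*(1+u))" for u
    define fr where "fr E = phi (1 - E/E0) * E^2 * sqrt ((E/V)^2 - 1)" for E
    define fp where "fp E = phi (1 - E/E0) * ((E/V)^2 - 1) powr (3/2)" for E
    define C where "C = h^n * sqrt h / (E0^n * V)"
    define Cp where "Cp = h^(n+1) * sqrt h / (E0^n * V^3)"
    have pt: "fr (E0 - h*u) = C * Q u \<and> fp (E0 - h*u) = Cp * Qp u" if u: "u \<in> {0..1}" for u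
    proof -
      have a1: "1 - (E0 - h*u)/E0 = h*u/E0" using E0 by (simp add: field_simps)
      have "h*u/E0 \<le> h/E0" using u h E0 by (simp add: divide_right_mono mult_left_le)
      then have a2: "h*u/E0 \<in> {0..<r}" using u h E0 hr by auto
      have ph': "phi (1 - (E0 - h*u)/E0) = h^n * u^n / E0^n * chi (h*u/E0)"
        unfolding a1 using ph(4) a2 by (simp add: power_mult_distrib power_divide)
      have a3: "((E0 - h*u)/V)^2 - 1 = (h * (1-u) * (2*E0 - h*(1+u))) / V^2"
      proof -
        have "((E0 - h*u)/V)^2 - 1 = ((E0 - h*u)^2 - V^2)/V^2" using V by (simp add: field_simps)
        also have "(E0 - h*u)^2 - V^2 = h * (1-u) * (2*E0 - h*(1+u))"
          by (simp add: V_def power2_eq_square algebra_simps)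
        finally show ?thesis .
      qed
      have W: "2*E0 - h*(1+u) > 0" using posW[OF inU[OF h] u] .
      have nn: "0 \<le> h * (1-u) * (2*E0 - h*(1+u)) / V^2" using h u W by auto
      have a4: "sqrt (((E0 - h*u)/V)^2 - 1) = sqrt h * sqrt (1-u) * sqrt (2*E0 - h*(1+u)) / V"
        unfolding a3 using V by (simp add: real_sqrt_mult real_sqrt_divide)
      have a5: "(((E0 - h*u)/V)^2 - 1) powr (3/2) =
          (h * (1-u) * (2*E0 - h*(1+u)) / V^2) * (sqrt h * sqrt (1-u) * sqrt (2*E0 - h*(1+u)) / V)"
        using powr_32[OF nn] a4 a3 by simp
      have f1: "fr (E0 - h*u) = (h^n * u^n / E0^n * chi (h*u/E0)) * (E0 - h*u)^2 *
          (sqrt h * sqrt (1-u) * sqrt (2*E0 - h*(1+u)) / V)"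
        by (simp only: fr_def ph' a4)
      have f2: "fp (E0 - h*u) = (h^n * u^n / E0^n * chi (h*u/E0)) *
          ((h * (1-u) * (2*E0 - h*(1+u)) / V^2) * (sqrt h * sqrt (1-u) * sqrt (2*E0 - h*(1+u)) / V))"
        by (simp only: fp_def ph' a5)
      have g1: "fr (E0 - h*u) = C * Q u" unfolding f1 C_def Q_def using V E0
        by (simp add: field_simps power2_eq_square)
      have g2: "fp (E0 - h*u) = Cp * Qp u" unfolding f2 Cp_def Qp_def using V E0
        by (simp add: field_simps power2_eq_square power3_eq_cube)
      show ?thesis using g1 g2 by simp
    qed
    have KRQ: "KR h u = (m h * c0) * Q u" for u by (simp add: KR_def w1_def Q_def mult_ac)
    have KPQ: "KP h u = (m h * (c0/3)) * Qp u" for u by (simp add: KP_def w2_def Qp_def mult_ac)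
    have mpos: "m h > 0" using V mh by simp
    have ptR: "fr (E0 - h*u) = (C / (m h * c0)) * KR h u" if "u \<in> {0..1}" for u
      using pt[OF that] mpos c0 by (simp add: KRQ)
    have ptP: "fp (E0 - h*u) = (Cp / (m h * (c0/3))) * KP h u" if "u \<in> {0..1}" for u
      using pt[OF that] mpos c0 by (simp add: KPQ)
    have cKR: "continuous_on {0..1} (KR h)" by (rule C2_slice[OF CKR inU[OF h]])
    have cKP: "continuous_on {0..1} (KP h)" by (rule C2_slice[OF CKP inU[OF h]])
    have cfr: "continuous_on {0..1} (\<lambda>u. fr (E0 - h*u))"
    proof -
      have c: "continuous_on {0..1} (\<lambda>u. C / (m h * c0) * KR h u)"
        using continuous_on_mult[OF continuous_on_const cKR] .
      show ?thesis using continuous_on_cong[of "{0..1}" "{0..1}" "\<lambda>u. fr (E0 - h*u)"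
        "\<lambda>u. C / (m h * c0) * KR h u"] ptR c by simp
    qed
    have cfp: "continuous_on {0..1} (\<lambda>u. fp (E0 - h*u))"
    proof -
      have c: "continuous_on {0..1} (\<lambda>u. Cp / (m h * (c0/3)) * KP h u)"
        using continuous_on_mult[OF continuous_on_const cKP] .
      show ?thesis using continuous_on_cong[of "{0..1}" "{0..1}" "\<lambda>u. fp (E0 - h*u)"
        "\<lambda>u. Cp / (m h * (c0/3)) * KP h u"] ptP c by simp
    qed
    have iR: "integral {V..E0} fr = h * ((C / (m h * c0)) * R h)"
    proof -
      have "integral {0..1} (\<lambda>u. fr (E0 - h*u)) = integral {0..1} (\<lambda>u. C / (m h * c0) * KR h u)"
        by (rule integral_cong) (rule ptR)
      then show ?thesis unfolding V_def int_subst[OF h(1) cfr] R_def by simp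
    qed
    have iP: "integral {V..E0} fp = h * ((Cp / (m h * (c0/3))) * P h)"
    proof -
      have "integral {0..1} (\<lambda>u. fp (E0 - h*u)) = integral {0..1} (\<lambda>u. Cp / (m h * (c0/3)) * KP h u)"
        by (rule integral_cong) (rule ptP)
      then show ?thesis unfolding V_def int_subst[OF h(1) cfp] P_def by simp
    qed
    have e1: "real n + 3/2 = real (n+1) + 1/2" by simp
    have e2: "real n + 3/2 + 1 = real (n+2) + 1/2" by simp
    have "rho phi E0 (E0 - h) = 4 * pi / V^3 * integral {V..E0} fr"
      by (simp add: rho_def fr_def[abs_def] V_def)
    also have "\<dots> = h powr (real n + 3/2) * R h"
      unfolding iR e1 powr_nhalf[OF h(1)] C_def mh c0_def using V E0 h
      by (simp add: field_simps power_Suc[symmetric] del: power_Suc)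
    finally have r1: "rho phi E0 (E0 - h) = h powr (real n + 3/2) * R h" .
    have "pres phi E0 (E0 - h) = 4 * pi / (3 * V) * integral {V..E0} fp"
      by (simp add: pres_def fp_def[abs_def] V_def)
    also have "\<dots> = h powr (real n + 3/2 + 1) * P h"
      unfolding iP e2 powr_nhalf[OF h(1)] Cp_def mh c0_def using V E0 h
      by (simp add: field_simps power_Suc[symmetric] del: power_Suc)
    finally show ?thesis using r1 by simp
  qed
  have zU: "0 \<in> U" using d0 by (simp add: U_def)
  have lR: "(R \<longlongrightarrow> R 0) (at_right 0)"
  proof -
    have "isCont R 0" unfolding R_def[abs_def] by (rule DERIV_isCont[OF IR(1)[OF zU]])
    then show ?thesis unfolding isCont_def by (rule tendsto_mono[OF at_le, rotated]) simp
  qed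
  have lP: "(P \<longlongrightarrow> P 0) (at_right 0)"
  proof -
    have "isCont P 0" unfolding P_def[abs_def] by (rule DERIV_isCont[OF IP(1)[OF zU]])
    then show ?thesis unfolding isCont_def by (rule tendsto_mono[OF at_le, rotated]) simp
  qed
  have R0: "R 0 > 0"
  proof -
    have "KR 0 = (\<lambda>u. (m 0 * c0 * chi 0 * (E0*E0) * sqrt (2*E0)) * (u^n * sqrt (1-u)))"
      by (rule ext) (simp add: KR_def w1_def mult_ac)
    then have eq: "R 0 = (m 0 * c0 * chi 0 * (E0*E0) * sqrt (2*E0)) * integral {0..1} (\<lambda>u. u^n * sqrt (1-u))"
      by (simp add: R_def)
    have K: "m 0 * c0 * chi 0 * (E0*E0) * sqrt (2*E0) > 0" using E0 c0 ph(3) by (simp add: m_def)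
    show ?thesis unfolding eq by (rule mult_pos_pos[OF K weight_pos(1)])
  qed
  have P0: "P 0 > 0"
  proof -
    have "KP 0 = (\<lambda>u. (m 0 * (c0/3) * chi 0 * (2*E0) * sqrt (2*E0)) * (u^n * ((1-u) * sqrt (1-u))))"
      by (rule ext) (simp add: KP_def w2_def mult_ac)
    then have eq: "P 0 = (m 0 * (c0/3) * chi 0 * (2*E0) * sqrt (2*E0)) * integral {0..1} (\<lambda>u. u^n * ((1-u) * sqrt (1-u)))"
      by (simp add: P_def)
    have K: "m 0 * (c0/3) * chi 0 * (2*E0) * sqrt (2*E0) > 0" using E0 c0 ph(3) by (simp add: m_def)
    show ?thesis unfolding eq by (rule mult_pos_pos[OF K weight_pos(2)])
  qed
  have hb: "h \<in> {-d0/2..d0/2}" if "0 < h" "h < d0/2" for h using that by auto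
  have lim: "filterlim (Ig (rho phi E0) (pres phi E0)) at_bot (at_left E0)"
  proof (rule asym[where a = "real n + 3/2" and \<delta> = "d0/2" and R = R and P = P and Ra = R1 and Rb = R2
        and Pa = P1 and Pb = P2 and Rz = "R 0" and Pz = "P 0" and B = "max BR BP"])
    show "0 < real n + 3/2" by simp
    show "real n + 3/2 < 5" using assms(3) by simp
    show "0 < d0/2" using d0 by simp
    show "\<And>h. 0 < h \<Longrightarrow> h < d0/2 \<Longrightarrow> rho phi E0 (E0 - h) = h powr (real n + 3/2) * R h"
      using rep by blast
    show "\<And>h. 0 < h \<Longrightarrow> h < d0/2 \<Longrightarrow> pres phi E0 (E0 - h) = h powr (real n + 3/2 + 1) * P h"
      using rep by blast
    show "\<And>h. 0 < h \<Longrightarrow> h < d0/2 \<Longrightarrow> (R has_real_derivative R1 h) (at h)"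
      unfolding R_def[abs_def] R1_def using IR(1) inU by blast
    show "\<And>h. 0 < h \<Longrightarrow> h < d0/2 \<Longrightarrow> (R1 has_real_derivative R2 h) (at h)"
      unfolding R1_def[abs_def] R2_def using IR(2) inU by blast
    show "\<And>h. 0 < h \<Longrightarrow> h < d0/2 \<Longrightarrow> (P has_real_derivative P1 h) (at h)"
      unfolding P_def[abs_def] P1_def using IP(1) inU by blast
    show "\<And>h. 0 < h \<Longrightarrow> h < d0/2 \<Longrightarrow> (P1 has_real_derivative P2 h) (at h)"
      unfolding P1_def[abs_def] P2_def using IP(2) inU by blast
    show "(R \<longlongrightarrow> R 0) (at_right 0)" "R 0 > 0" "(P \<longlongrightarrow> P 0) (at_right 0)" "P 0 > 0"
      using lR R0 lP P0 by auto
    show "\<And>h. 0 < h \<Longrightarrow> h < d0/2 \<Longrightarrow>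
        \<bar>R1 h\<bar> \<le> max BR BP \<and> \<bar>R2 h\<bar> \<le> max BR BP \<and> \<bar>P1 h\<bar> \<le> max BR BP \<and> \<bar>P2 h\<bar> \<le> max BR BP"
    proof -
      fix h :: real assume h: "0 < h" "h < d0/2"
      have "\<bar>R1 h\<bar> \<le> BR \<and> \<bar>R2 h\<bar> \<le> BR" using BR hb[OF h] by (simp add: R1_def R2_def)
      moreover have "\<bar>P1 h\<bar> \<le> BP \<and> \<bar>P2 h\<bar> \<le> BP" using BP hb[OF h] by (simp add: P1_def P2_def)
      ultimately show "\<bar>R1 h\<bar> \<le> max BR BP \<and> \<bar>R2 h\<bar> \<le> max BR BP \<and> \<bar>P1 h\<bar> \<le> max BR BP \<and> \<bar>P2 h\<bar> \<le> max BR BP"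
        by (simp add: le_max_iff_disj)
    qed
  qed
  then have lim': "filterlim (Iind phi E0) at_bot (at_left E0)" by (simp add: Iind_Ig)
  then have "eventually (\<lambda>V. Iind phi E0 V \<le> 0) (at_left E0)" by (simp add: filterlim_at_bot)
  then obtain b where b: "b < E0" "\<And>y. b < y \<Longrightarrow> y < E0 \<Longrightarrow> Iind phi E0 y \<le> 0"
    unfolding eventually_at_left_field by blast
  define V0 where "V0 = (max b 0 + E0) / 2"
  have "0 < V0 \<and> V0 < E0 \<and> (\<forall>V\<in>{V0..<E0}. Iind phi E0 V \<le> 0)"
    using b E0 by (auto simp: V0_def intro!: b(2))
  then show ?thesis using lim' by blast


qed

end
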